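(* For a real parameter $a\ge \tfrac12$, let $$\rho_a=\frac{1}{3(3+a)}\begin{pmatrix} 1&0&0&0&1&0&0&0&1\\ 0&a&0&1&0&0&0&0&0\\ 0&0&2&0&0&0&1&0&0\\ 0&1&0&2&0&0&0&0&0\\ 1&0&0&0&1&0&0&0&1\\ 0&0&0&0&0&a&0&1&0\\ 0&0&1&0&0&0&a&0&0\\ 0&0&0&0&0&1&0&2&0\\ 1&0&0&0&1&0&0&0&1 \end{pmatrix}$$ in the product basis $|i\rangle|j\rangle$, $i,j\in\{1,2,3\}$, ordered lexicographically, of $\mathbb{C}^3\otimes\mathbb{C}^3$. Let $\Gamma: M_3(\mathbb{C})\to M_3(\mathbb{C})$ be $$\Gamma(A)=\frac12\begin{pmatrix}a_{11}+a_{22}&-a_{12}&-a_{13}\\-a_{21}&a_{22}+a_{33}&-a_{23}\\-a_{31}&-a_{32}&a_{33}+a_{11}\end{pmatrix},\qquad A=(a_{ij}).$$ Then $\rho_a$ is a state whose partial transpose is positive semidefinite, the matrix $(I\otimes\Gamma)(\rho_a)$ has $\frac{a-1}{18+6a}$ as an eigenvalue (with eigenvector $|1\rangle|1\rangle+|2\rangle|2\rangle+|3\rangle|3\rangle$), its coefficient $D_9=-\det\big((I\otimes\Gamma)(\rho_a)\big)$ is strictly positive whenever $\tfrac12\le a<1$, and consequently $\rho_a$ is entangled for every $a$ with $\tfrac12\le a<1$.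
   Context: A state on $\mathbb{C}^3\otimes\mathbb{C}^3$ is a positive semidefinite $9\times 9$ matrix of trace one; it is separable if it is a convex combination of product states $\rho_A\otimes\rho_B$, and entangled otherwise. The partial transpose $\rho^{T_B}$ is defined by $\langle m|\langle\mu|\rho^{T_B}|n\rangle|\nu\rangle=\langle m|\langle\nu|\rho|n\rangle|\mu\rangle$. $(I\otimes\Gamma)(\rho)$ means applying $\Gamma$ to each $3\times3$ block $\rho_{(i,\cdot),(k,\cdot)}$ of $\rho$ (blocks indexed by the first factor). $D_9$ denotes the constant coefficient in $\det(\lambda I-M)=\lambda^9+D_1\lambda^8+\cdots+D_9$ for $M=(I\otimes\Gamma)(\rho_a)$. The map $\Gamma$ is a positive (indecomposable) linear map, i.e., it maps positive semidefinite matrices to positive semidefinite matrices. *)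

theory Defs
  imports "Jordan_Normal_Form.Char_Poly"
begin

text \<open>Matrices on C^3 (x) C^3 are 9x9 complex matrices (Jordan_Normal_Form type mat);
 basis vector |i>|j> (i,j in {0,1,2}) has index 3*i+j (lexicographic order).\<close>

definition psd :: "nat \<Rightarrow> complex mat \<Rightarrow> bool" where
  "psd n A \<longleftrightarrow> A \<in> carrier_mat n n
     \<and> (\<forall>i<n. \<forall>j<n. A $$ (i,j) = cnj (A $$ (j,i)))
     \<and> (\<forall>v \<in> carrier_vec n.
          let q = (\<Sum>i<n. \<Sum>j<n. cnj (v $ i) * A $$ (i,j) * v $ j)
          in Im q = 0 \<and> Re q \<ge> 0)"

definition is_state :: "nat \<Rightarrow> complex mat \<Rightarrow> bool" where
  "is_state n A \<longleftrightarrow> psd n A \<and> (\<Sum>i<n. A $$ (i,i)) = 1"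

definition tensor33 :: "complex mat \<Rightarrow> complex mat \<Rightarrow> complex mat" where
  "tensor33 A B = mat 9 9 (\<lambda>(r,c). A $$ (r div 3, c div 3) * B $$ (r mod 3, c mod 3))"

definition separable :: "complex mat \<Rightarrow> bool" where
  "separable \<rho> \<longleftrightarrow> (\<exists>(n::nat) (p::nat \<Rightarrow> real) (\<rho>A::nat \<Rightarrow> complex mat) \<rho>B.
      (\<forall>k<n. p k \<ge> 0 \<and> is_state 3 (\<rho>A k) \<and> is_state 3 (\<rho>B k))
      \<and> (\<Sum>k<n. p k) = 1
      \<and> \<rho> = mat 9 9 (\<lambda>(r,c). \<Sum>k<n. complex_of_real (p k) * tensor33 (\<rho>A k) (\<rho>B k) $$ (r,c)))"

definition entangled :: "complex mat \<Rightarrow> bool" where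
  "entangled \<rho> \<longleftrightarrow> is_state 9 \<rho> \<and> \<not> separable \<rho>"

definition partial_transpose_B :: "complex mat \<Rightarrow> complex mat" where
  "partial_transpose_B \<rho> = mat 9 9 (\<lambda>(r,c).
      \<rho> $$ (3 * (r div 3) + c mod 3, 3 * (c div 3) + r mod 3))"

definition Gamma :: "complex mat \<Rightarrow> complex mat" where
  "Gamma A = mat 3 3 (\<lambda>(i,j). if i = j
      then (A $$ (i,i) + A $$ ((i+1) mod 3, (i+1) mod 3)) / 2
      else - A $$ (i,j) / 2)"

definition block33 :: "complex mat \<Rightarrow> nat \<Rightarrow> nat \<Rightarrow> complex mat" where
  "block33 M i k = mat 3 3 (\<lambda>(m,n). M $$ (3*i + m, 3*k + n))"

definition id_tensor_map :: "(complex mat \<Rightarrow> complex mat) \<Rightarrow> complex mat \<Rightarrow> complex mat" where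
  "id_tensor_map \<Phi> M = mat 9 9 (\<lambda>(r,c). \<Phi> (block33 M (r div 3) (c div 3)) $$ (r mod 3, c mod 3))"

definition rho_a :: "real \<Rightarrow> complex mat" where
  "rho_a a = (complex_of_real (1 / (3 * (3 + a)))) \<cdot>\<^sub>m mat_of_rows_list 9 (
    let x = complex_of_real a in
    [[1,0,0,0,1,0,0,0,1],
     [0,x,0,1,0,0,0,0,0],
     [0,0,2,0,0,0,1,0,0],
     [0,1,0,2,0,0,0,0,0],
     [1,0,0,0,1,0,0,0,1],
     [0,0,0,0,0,x,0,1,0],
     [0,0,1,0,0,0,x,0,0],
     [0,0,0,0,0,1,0,2,0],
     [1,0,0,0,1,0,0,0,1]])"

definition max_ent_vec :: "complex vec" where
  "max_ent_vec = vec 9 (\<lambda>i. if i \<in> {0,4,8} then 1 else 0)"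

end

theory Submission
  imports Defs
begin

lemma det2: assumes "A \<in> carrier_mat 2 2"
  shows "det A = A$$(0,0) * A$$(1,1) - A$$(0,1) * A$$(1,0)"
proof -
  have "det A = (\<Sum>i<2. A $$ (i,0) * cofactor A i 0)" by (rule laplace_expansion_column[OF assms], simp)
  also have "\<dots> = A$$(0,0) * A$$(1,1) - A$$(0,1) * A$$(1,0)"
    using assms by (simp add: numeral_2_eq_2 cofactor_def det_single mat_delete_def)
  finally show ?thesis .
qed
lemma det2m: "det (mat (Suc (Suc 0)) (Suc (Suc 0)) f) = f(0,0) * f(1,1) - f(0,1) * f(1,0)"
  by (subst det2, auto simp: numeral_2_eq_2)
lemma det3: assumes "A \<in> carrier_mat 3 3"
  shows "det A = A$$(0,0) * (A$$(1,1) * A$$(2,2) - A$$(1,2) * A$$(2,1))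
     - A$$(1,0) * (A$$(0,1) * A$$(2,2) - A$$(0,2) * A$$(2,1))
     + A$$(2,0) * (A$$(0,1) * A$$(1,2) - A$$(0,2) * A$$(1,1))"
proof -
  have "det A = (\<Sum>i<3. A $$ (i,0) * cofactor A i 0)" by (rule laplace_expansion_column[OF assms], simp)
  also have "\<dots> = A$$(0,0) * (A$$(1,1) * A$$(2,2) - A$$(1,2) * A$$(2,1))
     - A$$(1,0) * (A$$(0,1) * A$$(2,2) - A$$(0,2) * A$$(2,1))
     + A$$(2,0) * (A$$(0,1) * A$$(1,2) - A$$(0,2) * A$$(1,1))"
    using assms by (simp add: numeral_3_eq_3 cofactor_def det2m mat_delete_def eval_nat_numeral; simp add: algebra_simps)
  finally show ?thesis .
qed


lemma amgm3_min: fixes y0 y1 y2 :: real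
  assumes "0 \<le> y0" "y0 \<le> y1" "y0 \<le> y2"
  shows "y0^2*y2 + y0*y1^2 + y1*y2^2 - 3*y0*y1*y2 \<ge> 0"
proof -
  define s where "s = y1 - y0"
  define t where "t = y2 - y0"
  have s: "s \<ge> 0" and t: "t \<ge> 0" using assms by (auto simp: s_def t_def)
  have eq: "y0^2*y2 + y0*y1^2 + y1*y2^2 - 3*y0*y1*y2 = y0 * (s^2 - s*t + t^2) + s * t^2"
    unfolding s_def t_def by (simp add: power2_eq_square algebra_simps)
  have "s^2 - s*t + t^2 \<ge> 0"
  proof -
    have "s^2 - s*t + t^2 = (s - t/2)^2 + 3/4 * t^2" by (simp add: power2_eq_square algebra_simps)
    also have "\<dots> \<ge> 0" by simp
    finally show ?thesis .
  qed
  then have "y0 * (s^2 - s*t + t^2) \<ge> 0" using assms(1) by simp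
  moreover have "s * t^2 \<ge> 0" using s by simp
  ultimately show ?thesis unfolding eq by linarith
qed

lemma amgm3: fixes y0 y1 y2 :: real
  assumes "0 \<le> y0" "0 \<le> y1" "0 \<le> y2"
  shows "y0^2*y2 + y0*y1^2 + y1*y2^2 - 3*y0*y1*y2 \<ge> 0"
proof -
  consider "y0 \<le> y1 \<and> y0 \<le> y2" | "y1 \<le> y0 \<and> y1 \<le> y2" | "y2 \<le> y0 \<and> y2 \<le> y1" by linarith
  then show ?thesis
  proof cases
    case 1 then show ?thesis using amgm3_min[of y0 y1 y2] assms by auto
  next
    case 2 then have "y1^2*y0 + y1*y2^2 + y2*y0^2 - 3*y1*y2*y0 \<ge> 0" using amgm3_min[of y1 y2 y0] assms by auto
    then show ?thesis by (simp add: algebra_simps)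
  next
    case 3 then have "y2^2*y1 + y2*y0^2 + y0*y1^2 - 3*y2*y0*y1 \<ge> 0" using amgm3_min[of y2 y0 y1] assms by auto
    then show ?thesis by (simp add: algebra_simps)
  qed
qed

lemma choi_form: fixes p0 p1 p2 q0 q1 q2 :: real
  shows "p0^2*q0^2 + p0^2*q1^2 + p1^2*q1^2 + p1^2*q2^2 + p2^2*q2^2 + p2^2*q0^2
     - 2*(p0*p1*q0*q1 + p0*p2*q0*q2 + p1*p2*q1*q2) \<ge> 0" (is "?R \<ge> 0")
proof -
  define e0 where "e0 = 2*q0^2 + q1^2"
  define e1 where "e1 = 2*q1^2 + q2^2"
  define e2 where "e2 = 2*q2^2 + q0^2"
  define S where "S = e0*p0^2 + e1*p1^2 + e2*p2^2"
  define N where "N = (q0^2)^2*(q2^2) + (q0^2)*(q1^2)^2 + (q1^2)*(q2^2)^2 - 3*(q0^2)*(q1^2)*(q2^2)"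
  have id: "e0*e1*e2*?R = S*N + e2*(e0*p0*q1 - e1*p1*q0)^2 + e1*(e0*p0*q2 - e2*p2*q0)^2 + e0*(e1*p1*q2 - e2*p2*q1)^2"
    unfolding e0_def e1_def e2_def S_def N_def by (simp add: power2_eq_square algebra_simps)
  have e: "e0 \<ge> 0" "e1 \<ge> 0" "e2 \<ge> 0" unfolding e0_def e1_def e2_def by auto
  have "S \<ge> 0" unfolding S_def using e by auto
  moreover have "N \<ge> 0" unfolding N_def by (rule amgm3, auto)
  ultimately have "S*N \<ge> 0" by simp
  moreover have "e2*(e0*p0*q1 - e1*p1*q0)^2 \<ge> 0" "e1*(e0*p0*q2 - e2*p2*q0)^2 \<ge> 0" "e0*(e1*p1*q2 - e2*p2*q1)^2 \<ge> 0"
    using e by auto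
  ultimately have prod: "e0*e1*e2*?R \<ge> 0" unfolding id by linarith
  show ?thesis
  proof (cases "e0 = 0 \<or> e1 = 0 \<or> e2 = 0")
    case True
    then have "(q0 = 0 \<and> q1 = 0) \<or> (q1 = 0 \<and> q2 = 0) \<or> (q2 = 0 \<and> q0 = 0)"
      unfolding e0_def e1_def e2_def by (auto simp: add_nonneg_eq_0_iff)
    then show ?thesis by (elim disjE) (auto simp: power2_eq_square)
  next
    case False
    then have "e0*e1*e2 > 0" using e by (simp add: less_le)
    with prod show ?thesis by (simp add: zero_le_mult_iff)
  qed
qed


lemma psd_form: assumes "psd n A" "v \<in> carrier_vec n"
  shows "Im (\<Sum>i<n. \<Sum>j<n. cnj (v $ i) * A $$ (i,j) * v $ j) = 0 \<and> Re (\<Sum>i<n. \<Sum>j<n. cnj (v $ i) * A $$ (i,j) * v $ j) \<ge> 0"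
  using assms unfolding psd_def Let_def by blast

lemma qf2: assumes "i < n" "k < n" "i \<noteq> k"
  shows "(\<Sum>j<n. \<Sum>l<n. cnj (vec n (\<lambda>m. (if m = i then x else 0) + (if m = k then y else 0)) $ j) * A $$ (j,l)
      * vec n (\<lambda>m. (if m = i then x else 0) + (if m = k then y else 0)) $ l)
   = cnj x * A$$(i,i) * x + cnj x * A$$(i,k) * y + cnj y * A$$(k,i) * x + cnj y * A$$(k,k) * y"
proof -
  have "(\<Sum>j<n. \<Sum>l<n. cnj (vec n (\<lambda>m. (if m = i then x else 0) + (if m = k then y else 0)) $ j) * A $$ (j,l)
      * vec n (\<lambda>m. (if m = i then x else 0) + (if m = k then y else 0)) $ l)
    = (\<Sum>j<n. \<Sum>l<n. ((if j = i then cnj x else 0) + (if j = k then cnj y else 0)) * A $$ (j,l)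
      * ((if l = i then x else 0) + (if l = k then y else 0)))"
    by (intro sum.cong refl, auto)
  also have "\<dots> = (\<Sum>j<n. (if j = i then cnj x else 0) * (\<Sum>l<n. A $$ (j,l) * ((if l = i then x else 0) + (if l = k then y else 0))))
     + (\<Sum>j<n. (if j = k then cnj y else 0) * (\<Sum>l<n. A $$ (j,l) * ((if l = i then x else 0) + (if l = k then y else 0))))"
    by (simp add: sum.distrib[symmetric] sum_distrib_left algebra_simps)
  also have "\<dots> = cnj x * (\<Sum>l<n. A $$ (i,l) * ((if l = i then x else 0) + (if l = k then y else 0)))
     + cnj y * (\<Sum>l<n. A $$ (k,l) * ((if l = i then x else 0) + (if l = k then y else 0)))"
    using assms by (simp add: if_distrib[where f="\<lambda>z. z * _"] cong: if_cong)
  also have "(\<Sum>l<n. A $$ (i,l) * ((if l = i then x else 0) + (if l = k then y else 0))) = A$$(i,i) * x + A$$(i,k) * y"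
    using assms by (simp add: distrib_left sum.distrib if_distrib[where f="\<lambda>z. _ * z"] cong: if_cong)
  also have "(\<Sum>l<n. A $$ (k,l) * ((if l = i then x else 0) + (if l = k then y else 0))) = A$$(k,i) * x + A$$(k,k) * y"
    using assms by (simp add: distrib_left sum.distrib if_distrib[where f="\<lambda>z. _ * z"] cong: if_cong)
  finally show ?thesis by (simp add: algebra_simps)
qed

lemma psd_diag: assumes "psd n A" "i < n"
  shows "A$$(i,i) = complex_of_real (Re (A$$(i,i)))" "Re (A$$(i,i)) \<ge> 0"
proof -
  have h: "A$$(i,i) = cnj (A$$(i,i))" using assms unfolding psd_def by blast
  then show "A$$(i,i) = complex_of_real (Re (A$$(i,i)))"
    by (metis Reals_cnj_iff complex_is_Real_iff of_real_Re)
  let ?v = "vec n (\<lambda>m. (if m = i then 1 else 0)) :: complex vec"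
  have "Re (\<Sum>j<n. \<Sum>l<n. cnj (?v $ j) * A $$ (j,l) * ?v $ l) \<ge> 0"
    using psd_form[OF assms(1), of ?v] by simp
  moreover have "(\<Sum>j<n. \<Sum>l<n. cnj (?v $ j) * A $$ (j,l) * ?v $ l) = A$$(i,i)"
  proof -
    have "(\<Sum>j<n. \<Sum>l<n. cnj (?v $ j) * A $$ (j,l) * ?v $ l) = (\<Sum>j<n. if j = i then (\<Sum>l<n. if l = i then A$$(i,i) else 0) else 0)"
    proof -
      have d: "\<And>l j. A$$(j,l) * (if l = i then 1 else 0) = (if l = i then A$$(j,i) else 0)" by auto
      show ?thesis by (intro sum.cong refl) (auto simp: d)
    qed
    also have "\<dots> = A$$(i,i)" using assms(2) by simp
    finally show ?thesis .
  qed
  ultimately show "Re (A$$(i,i)) \<ge> 0" by metis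
qed

lemma psd_off: assumes "psd n A" "i < n" "k < n" "i \<noteq> k"
  shows "(cmod (A$$(i,k)))^2 \<le> Re (A$$(i,i)) * Re (A$$(k,k))"
proof -
  define \<alpha> where "\<alpha> = Re (A$$(i,i))"
  define \<beta> where "\<beta> = Re (A$$(k,k))"
  define c where "c = A$$(i,k)"
  have Aii: "A$$(i,i) = complex_of_real \<alpha>" unfolding \<alpha>_def using psd_diag[OF assms(1,2)] by simp
  have Akk: "A$$(k,k) = complex_of_real \<beta>" unfolding \<beta>_def using psd_diag[OF assms(1,3)] by simp
  have al: "\<alpha> \<ge> 0" unfolding \<alpha>_def using psd_diag[OF assms(1,2)] by simp
  have be: "\<beta> \<ge> 0" unfolding \<beta>_def using psd_diag[OF assms(1,3)] by simp
  have Aki: "A$$(k,i) = cnj c" unfolding c_def using assms unfolding psd_def by blast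
  have cc: "c * cnj c = complex_of_real ((cmod c)^2)" by (simp only: complex_norm_square)
  have cc2: "(complex_of_real (cmod c))^2 = c * cnj c" using cc by simp
  have test: "Re (cnj x * complex_of_real \<alpha> * x + cnj x * c * y + cnj y * cnj c * x + cnj y * complex_of_real \<beta> * y) \<ge> 0" for x y
  proof -
    let ?v = "vec n (\<lambda>m. (if m = i then x else 0) + (if m = k then y else 0))"
    have "Re (\<Sum>j<n. \<Sum>l<n. cnj (?v $ j) * A $$ (j,l) * ?v $ l) \<ge> 0"
      using psd_form[OF assms(1), of ?v] by simp
    then show ?thesis unfolding qf2[OF assms(2-4)] Aii Akk Aki c_def .
  qed
  consider "\<beta> > 0" | "\<alpha> > 0" | "\<alpha> = 0 \<and> \<beta> = 0" using al be by linarith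
  then show ?thesis
  proof cases
    case 1
    have "Re (cnj (complex_of_real \<beta>) * complex_of_real \<alpha> * complex_of_real \<beta> + cnj (complex_of_real \<beta>) * c * (- cnj c)
       + cnj (- cnj c) * cnj c * complex_of_real \<beta> + cnj (- cnj c) * complex_of_real \<beta> * (- cnj c)) \<ge> 0"
      by (rule test)
    also have "cnj (complex_of_real \<beta>) * complex_of_real \<alpha> * complex_of_real \<beta> + cnj (complex_of_real \<beta>) * c * (- cnj c)
       + cnj (- cnj c) * cnj c * complex_of_real \<beta> + cnj (- cnj c) * complex_of_real \<beta> * (- cnj c)
       = complex_of_real (\<beta> * (\<alpha> * \<beta> - (cmod c)^2))"
      by (simp add: algebra_simps cc2)
    finally have "\<beta> * (\<alpha> * \<beta> - (cmod c)^2) \<ge> 0" by simp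
    with 1 show ?thesis unfolding c_def \<alpha>_def \<beta>_def by (simp add: zero_le_mult_iff)
  next
    case 2
    have "Re (cnj (- c) * complex_of_real \<alpha> * (- c) + cnj (- c) * c * complex_of_real \<alpha>
       + cnj (complex_of_real \<alpha>) * cnj c * (- c) + cnj (complex_of_real \<alpha>) * complex_of_real \<beta> * complex_of_real \<alpha>) \<ge> 0"
      by (rule test)
    also have "cnj (- c) * complex_of_real \<alpha> * (- c) + cnj (- c) * c * complex_of_real \<alpha>
       + cnj (complex_of_real \<alpha>) * cnj c * (- c) + cnj (complex_of_real \<alpha>) * complex_of_real \<beta> * complex_of_real \<alpha>
       = complex_of_real (\<alpha> * (\<alpha> * \<beta> - (cmod c)^2))"
      by (simp add: algebra_simps cc2)
    finally have "\<alpha> * (\<alpha> * \<beta> - (cmod c)^2) \<ge> 0" by simp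
    with 2 show ?thesis unfolding c_def \<alpha>_def \<beta>_def by (simp add: zero_le_mult_iff)
  next
    case 3
    have "Re (cnj 1 * complex_of_real \<alpha> * 1 + cnj 1 * c * (- cnj c)
       + cnj (- cnj c) * cnj c * 1 + cnj (- cnj c) * complex_of_real \<beta> * (- cnj c)) \<ge> 0"
      by (rule test)
    also have "cnj 1 * complex_of_real \<alpha> * 1 + cnj 1 * c * (- cnj c)
       + cnj (- cnj c) * cnj c * 1 + cnj (- cnj c) * complex_of_real \<beta> * (- cnj c)
       = complex_of_real (- 2 * (cmod c)^2)"
      using 3 by (simp add: algebra_simps cc2)
    finally have "(cmod c)^2 \<le> 0" by simp
    then show ?thesis using 3 unfolding c_def \<alpha>_def \<beta>_def by simp
  qed
qed


lemma off_bd: assumes A: "psd n A" and B: "psd n B" and ik: "i < n" "k < n" "i \<noteq> k"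
  shows "Re (A$$(i,k) * B$$(i,k)) \<le> sqrt (Re (A$$(i,i))) * sqrt (Re (A$$(k,k))) * (sqrt (Re (B$$(i,i))) * sqrt (Re (B$$(k,k))))"
proof -
  have a: "cmod (A$$(i,k)) \<le> sqrt (Re (A$$(i,i))) * sqrt (Re (A$$(k,k)))"
    using psd_off[OF A ik] by (simp add: real_le_rsqrt real_sqrt_mult[symmetric])
  have b: "cmod (B$$(i,k)) \<le> sqrt (Re (B$$(i,i))) * sqrt (Re (B$$(k,k)))"
    using psd_off[OF B ik] by (simp add: real_le_rsqrt real_sqrt_mult[symmetric])
  have "Re (A$$(i,k) * B$$(i,k)) \<le> cmod (A$$(i,k) * B$$(i,k))" by (rule complex_Re_le_cmod)
  also have "\<dots> = cmod (A$$(i,k)) * cmod (B$$(i,k))" by (simp add: norm_mult)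
  also have "\<dots> \<le> sqrt (Re (A$$(i,i))) * sqrt (Re (A$$(k,k))) * (sqrt (Re (B$$(i,i))) * sqrt (Re (B$$(k,k))))"
    by (rule mult_mono[OF a b], use psd_diag[OF A ik(1)] psd_diag[OF A ik(2)] in auto)
  finally show ?thesis .
qed

definition Gf :: "complex mat \<Rightarrow> complex mat \<Rightarrow> complex" where
  "Gf A B = A$$(0,0)*B$$(0,0) + A$$(0,0)*B$$(1,1) + A$$(1,1)*B$$(1,1) + A$$(1,1)*B$$(2,2) + A$$(2,2)*B$$(2,2) + A$$(2,2)*B$$(0,0)
    - (A$$(0,1)*B$$(0,1) + A$$(0,2)*B$$(0,2) + A$$(1,0)*B$$(1,0) + A$$(1,2)*B$$(1,2) + A$$(2,0)*B$$(2,0) + A$$(2,1)*B$$(2,1))"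

lemma G_nonneg: assumes A: "psd 3 A" and B: "psd 3 B"
  shows "Re (Gf A B) \<ge> 0"
proof -
  define p0 where "p0 = sqrt (Re (A$$(0,0)))"
  define p1 where "p1 = sqrt (Re (A$$(1,1)))"
  define p2 where "p2 = sqrt (Re (A$$(2,2)))"
  define q0 where "q0 = sqrt (Re (B$$(0,0)))"
  define q1 where "q1 = sqrt (Re (B$$(1,1)))"
  define q2 where "q2 = sqrt (Re (B$$(2,2)))"
  have dA: "A$$(0,0) = complex_of_real (p0^2)" "A$$(1,1) = complex_of_real (p1^2)" "A$$(2,2) = complex_of_real (p2^2)"
    unfolding p0_def p1_def p2_def using psd_diag[OF A, of 0] psd_diag[OF A, of 1] psd_diag[OF A, of 2] by auto
  have dB: "B$$(0,0) = complex_of_real (q0^2)" "B$$(1,1) = complex_of_real (q1^2)" "B$$(2,2) = complex_of_real (q2^2)"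
    unfolding q0_def q1_def q2_def using psd_diag[OF B, of 0] psd_diag[OF B, of 1] psd_diag[OF B, of 2] by auto
  have o01: "Re (A$$(0,1) * B$$(0,1)) \<le> p0*p1*(q0*q1)" unfolding p0_def p1_def q0_def q1_def by (rule off_bd[OF A B], auto)
  have o02: "Re (A$$(0,2) * B$$(0,2)) \<le> p0*p2*(q0*q2)" unfolding p0_def p2_def q0_def q2_def by (rule off_bd[OF A B], auto)
  have o10: "Re (A$$(1,0) * B$$(1,0)) \<le> p1*p0*(q1*q0)" unfolding p0_def p1_def q0_def q1_def by (rule off_bd[OF A B], auto)
  have o12: "Re (A$$(1,2) * B$$(1,2)) \<le> p1*p2*(q1*q2)" unfolding p1_def p2_def q1_def q2_def by (rule off_bd[OF A B], auto)
  have o20: "Re (A$$(2,0) * B$$(2,0)) \<le> p2*p0*(q2*q0)" unfolding p0_def p2_def q0_def q2_def by (rule off_bd[OF A B], auto)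
  have o21: "Re (A$$(2,1) * B$$(2,1)) \<le> p2*p1*(q2*q1)" unfolding p2_def p1_def q2_def q1_def by (rule off_bd[OF A B], auto)
  have "Re (Gf A B) = p0^2*q0^2 + p0^2*q1^2 + p1^2*q1^2 + p1^2*q2^2 + p2^2*q2^2 + p2^2*q0^2
     - (Re (A$$(0,1)*B$$(0,1)) + Re (A$$(0,2)*B$$(0,2)) + Re (A$$(1,0)*B$$(1,0)) + Re (A$$(1,2)*B$$(1,2)) + Re (A$$(2,0)*B$$(2,0)) + Re (A$$(2,1)*B$$(2,1)))"
    unfolding Gf_def dA dB by simp
  also have "\<dots> \<ge> p0^2*q0^2 + p0^2*q1^2 + p1^2*q1^2 + p1^2*q2^2 + p2^2*q2^2 + p2^2*q0^2
     - 2*(p0*p1*q0*q1 + p0*p2*q0*q2 + p1*p2*q1*q2)"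
    using o01 o02 o10 o12 o20 o21 by (simp add: algebra_simps)
  finally show ?thesis using choi_form[of p0 q0 q1 p1 q2 p2] by linarith
qed

definition sc :: "real \<Rightarrow> complex" where "sc a = complex_of_real (1 / (3 * (3 + a)))"
definition Rrows :: "real \<Rightarrow> complex list list" where
 "Rrows a = (let x = complex_of_real a in
    [[1,0,0,0,1,0,0,0,1],
     [0,x,0,1,0,0,0,0,0],
     [0,0,2,0,0,0,1,0,0],
     [0,1,0,2,0,0,0,0,0],
     [1,0,0,0,1,0,0,0,1],
     [0,0,0,0,0,x,0,1,0],
     [0,0,1,0,0,0,x,0,0],
     [0,0,0,0,0,1,0,2,0],
     [1,0,0,0,1,0,0,0,1]])"
lemma rho_alt: "rho_a a = sc a \<cdot>\<^sub>m mat_of_rows_list 9 (Rrows a)"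
  unfolding rho_a_def sc_def Rrows_def by simp
lemma rho_carrier: "rho_a a \<in> carrier_mat 9 9" unfolding rho_a_def by (simp add: mat_of_rows_list_def Let_def numeral_eq_Suc)
lemma rho_idx: "i < 9 \<Longrightarrow> j < 9 \<Longrightarrow> rho_a a $$ (i,j) = sc a * Rrows a ! i ! j"
  unfolding rho_alt by (simp add: mat_of_rows_list_def Rrows_def Let_def)
lemma sum9: "(\<Sum>i<(9::nat). f i) = f 0 + f 1 + f 2 + f 3 + f 4 + f 5 + f 6 + f 7 + (f 8 :: 'a :: comm_monoid_add)"
  by (simp add: eval_nat_numeral lessThan_Suc ac_simps)
lemma cnj_sc: "cnj (sc a) = sc a" unfolding sc_def by simp

lemma rho_form: "(\<Sum>i<9. \<Sum>j<9. cnj (v $ i) * rho_a a $$ (i,j) * v $ j) =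
  sc a * (cnj (v$0 + v$4 + v$8) * (v$0 + v$4 + v$8)
    + (complex_of_real a - 1/2) * (cnj (v$1) * v$1 + cnj (v$5) * v$5 + cnj (v$6) * v$6)
    + 1/2 * (cnj (v$1 + 2 * v$3) * (v$1 + 2 * v$3) + cnj (v$6 + 2 * v$2) * (v$6 + 2 * v$2) + cnj (v$5 + 2 * v$7) * (v$5 + 2 * v$7)))"
  by (simp add: sum9 rho_idx Rrows_def Let_def algebra_simps)

lemma cases9: "(i::nat) < 9 \<Longrightarrow> i = 0 \<or> i = 1 \<or> i = 2 \<or> i = 3 \<or> i = 4 \<or> i = 5 \<or> i = 6 \<or> i = 7 \<or> i = 8" by auto
lemma cz: "cnj z * z = complex_of_real ((cmod z)^2)" by (metis complex_norm_square mult.commute)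

lemma rho_herm: "i < 9 \<Longrightarrow> j < 9 \<Longrightarrow> rho_a a $$ (i,j) = cnj (rho_a a $$ (j,i))"
  apply (simp add: rho_idx cnj_sc)
  apply (drule cases9, drule cases9)
  apply (elim disjE)
  apply (simp_all add: Rrows_def Let_def)
  done

lemma rho_psd: assumes "a \<ge> 1/2" shows "psd 9 (rho_a a)"
  unfolding psd_def Let_def
proof (intro conjI allI impI ballI)
  show "rho_a a \<in> carrier_mat 9 9" by (rule rho_carrier)
  show "\<And>i j. i < 9 \<Longrightarrow> j < 9 \<Longrightarrow> rho_a a $$ (i,j) = cnj (rho_a a $$ (j,i))" by (rule rho_herm)
  fix v :: "complex vec"
  define Q where "Q = 1 / (3 * (3 + a)) * ((cmod (v$0 + v$4 + v$8))^2
    + (a - 1/2) * ((cmod (v$1))^2 + (cmod (v$5))^2 + (cmod (v$6))^2)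
    + 1/2 * ((cmod (v$1 + 2 * v$3))^2 + (cmod (v$6 + 2 * v$2))^2 + (cmod (v$5 + 2 * v$7))^2))"
  have eq: "(\<Sum>i<9. \<Sum>j<9. cnj (v $ i) * rho_a a $$ (i,j) * v $ j) = complex_of_real Q"
    unfolding rho_form cz Q_def sc_def by simp
  have "Q \<ge> 0" unfolding Q_def using assms by (intro mult_nonneg_nonneg add_nonneg_nonneg) auto
  then show "Im (\<Sum>i<9. \<Sum>j<9. cnj (v $ i) * rho_a a $$ (i,j) * v $ j) = 0"
    "0 \<le> Re (\<Sum>i<9. \<Sum>j<9. cnj (v $ i) * rho_a a $$ (i,j) * v $ j)" unfolding eq by simp_all
qed

lemma rho_trace: assumes "a \<ge> 0" shows "(\<Sum>i<9. rho_a a $$ (i,i)) = 1"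
proof -
  have "(\<Sum>i<9. rho_a a $$ (i,i)) = sc a * (9 + 3 * complex_of_real a)"
    by (simp add: sum9 rho_idx Rrows_def Let_def algebra_simps)
  also have "\<dots> = complex_of_real (1 / (3 * (3 + a)) * (9 + 3 * a))"
  proof -
    have "9 + 3 * complex_of_real a = complex_of_real (9+3*a)" by simp
    then show ?thesis unfolding sc_def by (simp only: of_real_mult)
  qed
  also have "1 / (3 * (3 + a)) * (9 + 3 * a) = 1" using assms by (simp add: field_simps)
  finally show ?thesis by simp
qed

lemma rho_PT: "partial_transpose_B (rho_a a) = rho_a a"
  apply (rule eq_matI)
  apply (auto simp: partial_transpose_B_def rho_carrier[THEN carrier_matD(1)] rho_carrier[THEN carrier_matD(2)] dest!: cases9)
  apply (auto simp: rho_a_def mat_of_rows_list_def Let_def)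
  done

definition Mrows :: "real \<Rightarrow> complex list list" where
 "Mrows a = (let x = complex_of_real a in
   [[1+x,0,0,0,-1,0,0,0,-1],
    [0,x+2,0,-1,0,0,0,0,0],
    [0,0,3,0,0,0,-1,0,0],
    [0,-1,0,3,0,0,0,0,0],
    [-1,0,0,0,1+x,0,0,0,-1],
    [0,0,0,0,0,x+2,0,-1,0],
    [0,0,-1,0,0,0,x+2,0,0],
    [0,0,0,0,0,-1,0,3,0],
    [-1,0,0,0,-1,0,0,0,1+x]])"
definition KM :: "real \<Rightarrow> complex mat" where "KM a = mat_of_rows_list 9 (Mrows a)"
lemma KM_carrier: "KM a \<in> carrier_mat 9 9" unfolding KM_def Mrows_def by (simp add: mat_of_rows_list_def Let_def numeral_eq_Suc)
lemma M_eq: "id_tensor_map Gamma (rho_a a) = (sc a / 2) \<cdot>\<^sub>m KM a"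
  apply (rule eq_matI)
  apply (auto simp: id_tensor_map_def KM_carrier[THEN carrier_matD(1)] KM_carrier[THEN carrier_matD(2)] dest!: cases9)
  apply (auto simp: KM_def Mrows_def Gamma_def block33_def rho_alt Rrows_def mat_of_rows_list_def Let_def algebra_simps)
  done

lemma det_perm_sim: assumes A: "(A :: 'a :: comm_ring_1 mat) \<in> carrier_mat n n" and p: "p permutes {0..<n}"
  shows "det (mat n n (\<lambda>(i,j). A $$ (p i, p j))) = det A"
proof -
  define N where "N = mat n n (\<lambda>(i,j). A $$ (p i, j))"
  define B where "B = mat n n (\<lambda>(i,j). A $$ (p i, p j))"
  have N: "N \<in> carrier_mat n n" unfolding N_def by simp
  have B: "B \<in> carrier_mat n n" unfolding B_def by simp
  have dN: "det N = signof p * det A" unfolding N_def by (rule det_permute_rows[OF A p])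
  have pi: "\<And>i. i < n \<Longrightarrow> p i < n" using p by (meson atLeastLessThan_iff permutes_in_image zero_le)
  have eq: "transpose_mat B = mat n n (\<lambda>(i,j). transpose_mat N $$ (p i, j))"
    by (rule eq_matI, auto simp: N_def B_def pi)
  have "det B = det (transpose_mat B)"
    using det_transpose[OF B] by simp
  also have "\<dots> = signof p * det (transpose_mat N)" unfolding eq
    by (rule det_permute_rows[OF _ p], use N in simp)
  also have "det (transpose_mat N) = det N" by (rule det_transpose[OF N])
  finally have "det B = signof p * signof p * det A" using dN by simp
  moreover have "signof p * signof p = (1::'a)"
  proof -
    have "signof p = (1::'a) \<or> signof p = (-1::'a)" using signof_pm_one[of p] by auto
    then show ?thesis by (elim disjE) (metis mult_1, metis mult_minus1 minus_minus)
  qed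
  ultimately show ?thesis unfolding B_def by simp
qed

definition pp :: "nat \<Rightarrow> nat" where
  "pp i = (if i=1 then 4 else if i=4 then 1 else if i=2 then 8 else if i=8 then 2 else if i=6 then 7 else if i=7 then 6 else i)"
lemma pp_permutes: "pp permutes {0..<9}"
proof -
  have "pp = Transposition.transpose 1 4 \<circ> Transposition.transpose 2 8 \<circ> Transposition.transpose 6 7"
    by (auto simp: fun_eq_iff pp_def Transposition.transpose_def)
  moreover have "Transposition.transpose 1 4 \<circ> Transposition.transpose 2 8 \<circ> Transposition.transpose 6 7 permutes {0..<(9::nat)}"
    by (intro permutes_compose permutes_swap_id, auto)
  ultimately show ?thesis by simp
qed

definition B3 :: "complex \<Rightarrow> complex mat" where
  "B3 x = mat_of_rows_list 3 [[1+x,-1,-1],[-1,1+x,-1],[-1,-1,1+x]]"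
definition P2a :: "complex \<Rightarrow> complex mat" where
  "P2a x = mat_of_rows_list 2 [[3,-1],[-1,x+2]]"
definition P2b :: "complex \<Rightarrow> complex mat" where
  "P2b x = mat_of_rows_list 2 [[x+2,-1],[-1,3]]"
lemma B3c: "B3 x \<in> carrier_mat 3 3" unfolding B3_def by (simp add: mat_of_rows_list_def numeral_eq_Suc)
lemma P2ac: "P2a x \<in> carrier_mat 2 2" unfolding P2a_def by (simp add: mat_of_rows_list_def numeral_eq_Suc)
lemma P2bc: "P2b x \<in> carrier_mat 2 2" unfolding P2b_def by (simp add: mat_of_rows_list_def numeral_eq_Suc)

lemma KM_perm: "mat 9 9 (\<lambda>(i,j). KM a $$ (pp i, pp j)) = four_block_mat (B3 (complex_of_real a)) (0\<^sub>m 3 6) (0\<^sub>m 6 3)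
   (four_block_mat (P2a (complex_of_real a)) (0\<^sub>m 2 4) (0\<^sub>m 4 2)
     (four_block_mat (P2b (complex_of_real a)) (0\<^sub>m 2 2) (0\<^sub>m 2 2) (P2b (complex_of_real a))))"
proof (rule eq_matI)
  fix i j assume i: "i < dim_row (four_block_mat (B3 (complex_of_real a)) (0\<^sub>m 3 6) (0\<^sub>m 6 3)
   (four_block_mat (P2a (complex_of_real a)) (0\<^sub>m 2 4) (0\<^sub>m 4 2)
     (four_block_mat (P2b (complex_of_real a)) (0\<^sub>m 2 2) (0\<^sub>m 2 2) (P2b (complex_of_real a)))))"
   and j: "j < dim_col (four_block_mat (B3 (complex_of_real a)) (0\<^sub>m 3 6) (0\<^sub>m 6 3)
   (four_block_mat (P2a (complex_of_real a)) (0\<^sub>m 2 4) (0\<^sub>m 4 2)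
     (four_block_mat (P2b (complex_of_real a)) (0\<^sub>m 2 2) (0\<^sub>m 2 2) (P2b (complex_of_real a)))))"
  have i9: "i < 9" using i by (simp add: B3c[THEN carrier_matD(1)] P2ac[THEN carrier_matD(1)] P2bc[THEN carrier_matD(1)])
  have j9: "j < 9" using j by (simp add: B3c[THEN carrier_matD(2)] P2ac[THEN carrier_matD(2)] P2bc[THEN carrier_matD(2)])
  show "mat 9 9 (\<lambda>(i,j). KM a $$ (pp i, pp j)) $$ (i,j) = four_block_mat (B3 (complex_of_real a)) (0\<^sub>m 3 6) (0\<^sub>m 6 3)
   (four_block_mat (P2a (complex_of_real a)) (0\<^sub>m 2 4) (0\<^sub>m 4 2)
     (four_block_mat (P2b (complex_of_real a)) (0\<^sub>m 2 2) (0\<^sub>m 2 2) (P2b (complex_of_real a)))) $$ (i,j)"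
    using cases9[OF i9] cases9[OF j9]
    apply (elim disjE)
    apply (simp_all add: KM_def Mrows_def pp_def B3_def P2a_def P2b_def mat_of_rows_list_def Let_def)
    done
qed (simp_all add: B3c[THEN carrier_matD(1)] P2ac[THEN carrier_matD(1)] P2bc[THEN carrier_matD(1)] B3c[THEN carrier_matD(2)] P2ac[THEN carrier_matD(2)] P2bc[THEN carrier_matD(2)])
lemma alg1: "((1 + x) * ((1 + x) * (1 + x) - 1) - 2 * x - 4) * ((5 + 3 * x) * ((5 + x * 3) * (5 + x * 3))) = (x - 1) * (x + 2)^2 * (3 * x + (5::complex)) ^ 3"
  by (simp add: power2_eq_square power3_eq_cube algebra_simps)
lemma det_KM: "det (KM a) = (complex_of_real a - 1) * (complex_of_real a + 2)^2 * (3 * complex_of_real a + 5)^3"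
proof -
  let ?x = "complex_of_real a"
  have "det (KM a) = det (mat 9 9 (\<lambda>(i,j). KM a $$ (pp i, pp j)))"
    by (rule det_perm_sim[OF KM_carrier pp_permutes, symmetric])
  also have "\<dots> = det (B3 ?x) * (det (P2a ?x) * (det (P2b ?x) * det (P2b ?x)))"
  proof -
    have C4: "four_block_mat (P2b ?x) (0\<^sub>m 2 2) (0\<^sub>m 2 2) (P2b ?x) \<in> carrier_mat 4 4"
      using four_block_carrier_mat[OF P2bc P2bc] by simp
    have C6: "four_block_mat (P2a ?x) (0\<^sub>m 2 4) (0\<^sub>m 4 2) (four_block_mat (P2b ?x) (0\<^sub>m 2 2) (0\<^sub>m 2 2) (P2b ?x)) \<in> carrier_mat 6 6"
      using four_block_carrier_mat[OF P2ac C4] by simp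
    show ?thesis unfolding KM_perm
      by (simp add: det_four_block_mat_upper_right_zero[OF B3c refl _ C6]
        det_four_block_mat_upper_right_zero[OF P2ac refl _ C4]
        det_four_block_mat_upper_right_zero[OF P2bc refl _ P2bc])
  qed
  also have "\<dots> = (?x - 1) * (?x + 2)^2 * (3 * ?x + 5)^3"
    by (simp add: det3[OF B3c] det2[OF P2ac] det2[OF P2bc], simp add: B3_def P2a_def P2b_def mat_of_rows_list_def alg1)
  finally show ?thesis .
qed



lemma KM_dims[simp]: "dim_row (KM a) = 9" "dim_col (KM a) = 9" using KM_carrier[of a] by auto

lemma KM_idx: "i < 9 \<Longrightarrow> j < 9 \<Longrightarrow> KM a $$ (i,j) = Mrows a ! i ! j"
  unfolding KM_def Mrows_def by (simp add: mat_of_rows_list_def Let_def)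

lemma char0: assumes A: "(A :: complex mat) \<in> carrier_mat 9 9"
  shows "coeff (char_poly A) 0 = - det A"
proof -
  have "coeff (char_poly A) 0 = poly (char_poly A) 0" by (simp add: poly_0_coeff_0)
  also have "\<dots> = det (- (char_matrix A 0))" by (rule char_poly_matrix[OF A])
  also have "char_matrix A 0 = A" unfolding char_matrix_def using A by (intro eq_matI) auto
  also have "- A = (-1) \<cdot>\<^sub>m A" by (intro eq_matI) auto
  also have "det ((-1) \<cdot>\<^sub>m A) = (-1)^9 * det A" using A by (simp add: det_smult)
  finally show ?thesis by simp
qed

lemma lam_eq: assumes "a \<ge> 0" shows "complex_of_real ((a - 1) / (18 + 6 * a)) = sc a / 2 * (complex_of_real a - 1)"
proof -
  have e1: "complex_of_real a - 1 = complex_of_real (a - 1)" by simp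
  have e2: "sc a / 2 = complex_of_real (1 / (3 * (3 + a)) / 2)" unfolding sc_def by simp
  have "sc a / 2 * (complex_of_real a - 1) = complex_of_real (1 / (3 * (3 + a)) / 2 * (a - 1))"
    unfolding e1 e2 by (simp only: of_real_mult)
  also have "1 / (3 * (3 + a)) / 2 * (a - 1) = (a - 1) / (18 + 6 * a)" using assms by (simp add: field_simps)
  finally show ?thesis by (rule sym)
qed

lemma eig: assumes "a \<ge> 0"
  shows "eigenvector (id_tensor_map Gamma (rho_a a)) max_ent_vec (complex_of_real ((a - 1) / (18 + 6 * a)))"
  unfolding eigenvector_def lam_eq[OF assms] M_eq
proof (intro conjI)
  show "max_ent_vec \<in> carrier_vec (dim_row ((sc a / 2) \<cdot>\<^sub>m KM a))"
    using KM_carrier unfolding max_ent_vec_def by simp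
  show "max_ent_vec \<noteq> 0\<^sub>v (dim_row ((sc a / 2) \<cdot>\<^sub>m KM a))"
  proof
    assume "max_ent_vec = 0\<^sub>v (dim_row ((sc a / 2) \<cdot>\<^sub>m KM a))"
    then have "max_ent_vec $ 0 = 0\<^sub>v (dim_row ((sc a / 2) \<cdot>\<^sub>m KM a)) $ 0" by simp
    then show False using KM_carrier unfolding max_ent_vec_def by simp
  qed
  show "(sc a / 2) \<cdot>\<^sub>m KM a *\<^sub>v max_ent_vec = (sc a / 2 * (complex_of_real a - 1)) \<cdot>\<^sub>v max_ent_vec"
  proof (rule eq_vecI)
    show "dim_vec ((sc a / 2) \<cdot>\<^sub>m KM a *\<^sub>v max_ent_vec) = dim_vec ((sc a / 2 * (complex_of_real a - 1)) \<cdot>\<^sub>v max_ent_vec)"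
      using KM_carrier unfolding max_ent_vec_def by simp
    fix i assume "i < dim_vec ((sc a / 2 * (complex_of_real a - 1)) \<cdot>\<^sub>v max_ent_vec)"
    then have i: "i < 9" unfolding max_ent_vec_def by simp
    have "((sc a / 2) \<cdot>\<^sub>m KM a *\<^sub>v max_ent_vec) $ i = (sc a / 2) * (\<Sum>j<9. KM a $$ (i,j) * max_ent_vec $ j)"
      using KM_carrier i unfolding max_ent_vec_def
      by (simp add: mult_mat_vec_def scalar_prod_def atLeast0LessThan sum_distrib_left ac_simps)
    also have "(\<Sum>j<9. KM a $$ (i,j) * max_ent_vec $ j) = (complex_of_real a - 1) * max_ent_vec $ i"
      using cases9[OF i] 
      by (elim disjE) (simp_all add: sum9 KM_idx Mrows_def Let_def max_ent_vec_def)
    also have "sc a / 2 * ((complex_of_real a - 1) * max_ent_vec $ i) = ((sc a / 2 * (complex_of_real a - 1)) \<cdot>\<^sub>v max_ent_vec) $ i"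
      using i unfolding max_ent_vec_def by simp
    finally show "((sc a / 2) \<cdot>\<^sub>m KM a *\<^sub>v max_ent_vec) $ i = ((sc a / 2 * (complex_of_real a - 1)) \<cdot>\<^sub>v max_ent_vec) $ i" .
  qed
qed

lemma coeff_val: assumes "a \<ge> 0"
  shows "coeff (char_poly (id_tensor_map Gamma (rho_a a))) 0
    = complex_of_real (- ((1 / (3 * (3 + a)) / 2)^9 * ((a - 1) * (a + 2)^2 * (3 * a + 5)^3)))"
proof -
  have "coeff (char_poly (id_tensor_map Gamma (rho_a a))) 0 = - det ((sc a / 2) \<cdot>\<^sub>m KM a)"
    unfolding M_eq by (rule char0, use KM_carrier in simp)
  also have "\<dots> = - ((sc a / 2)^9 * det (KM a))" using KM_carrier by (simp add: det_smult)
  also have "\<dots> = complex_of_real (- ((1 / (3 * (3 + a)) / 2)^9 * ((a - 1) * (a + 2)^2 * (3 * a + 5)^3)))"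
    unfolding det_KM sc_def
    by (simp only: of_real_minus of_real_mult of_real_power of_real_add of_real_diff of_real_numeral of_real_1 of_real_divide)
  finally show ?thesis .
qed

definition Fe :: "(nat \<times> nat \<Rightarrow> complex) \<Rightarrow> complex" where
  "Fe g = g(0,0) + g(1,1) + g(4,4) + g(5,5) + g(8,8) + g(6,6) - (g(0,4) + g(0,8) + g(4,0) + g(4,8) + g(8,0) + g(8,4))"

lemma Fe_sum: "Fe (\<lambda>ij. \<Sum>k<n. h k ij) = (\<Sum>k<n. Fe (h k))"
  by (simp add: Fe_def sum.distrib sum_subtractf)

lemma Fe_rho: "Fe (\<lambda>ij. rho_a a $$ ij) = sc a * (3 * complex_of_real a - 3)"
  by (simp add: Fe_def rho_idx Rrows_def Let_def algebra_simps)

lemma Fe_tensor: "Fe (\<lambda>ij. c * tensor33 A B $$ ij) = c * Gf A B"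
  by (simp add: Fe_def tensor33_def Gf_def algebra_simps numeral_2_eq_2)

lemma not_sep: assumes "a \<ge> 1/2" "a < 1" shows "\<not> separable (rho_a a)"
proof
  assume "separable (rho_a a)"
  then obtain n :: nat and p \<rho>A \<rho>B where H: "\<forall>k<n. p k \<ge> 0 \<and> is_state 3 (\<rho>A k) \<and> is_state 3 (\<rho>B k)"
    and "sum p {..<n} = 1" and eq: "rho_a a = mat 9 9 (\<lambda>(r,c). \<Sum>k<n. complex_of_real (p k) * tensor33 (\<rho>A k) (\<rho>B k) $$ (r,c))"
    unfolding separable_def by blast
  have "Fe (\<lambda>ij. rho_a a $$ ij) = Fe (\<lambda>ij. \<Sum>k<n. complex_of_real (p k) * tensor33 (\<rho>A k) (\<rho>B k) $$ ij)"
    by (subst eq, simp add: Fe_def)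
  also have "\<dots> = (\<Sum>k<n. complex_of_real (p k) * Gf (\<rho>A k) (\<rho>B k))"
    unfolding Fe_sum Fe_tensor ..
  finally have E: "sc a * (3 * complex_of_real a - 3) = (\<Sum>k<n. complex_of_real (p k) * Gf (\<rho>A k) (\<rho>B k))"
    unfolding Fe_rho .
  have "Re (\<Sum>k<n. complex_of_real (p k) * Gf (\<rho>A k) (\<rho>B k)) = (\<Sum>k<n. p k * Re (Gf (\<rho>A k) (\<rho>B k)))"
    by (simp add: Re_sum)
  also have "\<dots> \<ge> 0"
  proof (rule sum_nonneg)
    fix k assume "k \<in> {..<n}"
    then have "p k \<ge> 0" "psd 3 (\<rho>A k)" "psd 3 (\<rho>B k)" using H unfolding is_state_def by auto
    then show "p k * Re (Gf (\<rho>A k) (\<rho>B k)) \<ge> 0" using G_nonneg by simp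
  qed
  finally have "Re (sc a * (3 * complex_of_real a - 3)) \<ge> 0" unfolding E .
  moreover have "Re (sc a * (3 * complex_of_real a - 3)) = 1 / (3 * (3 + a)) * (3 * a - 3)" unfolding sc_def by simp
  moreover have "1 / (3 * (3 + a)) * (3 * a - 3) < 0" using assms by (intro mult_pos_neg) auto
  ultimately show False by linarith
qed

theorem mainTheorem2:
  fixes a :: real
  assumes "a \<ge> 1/2"
  shows "is_state 9 (rho_a a)
    \<and> psd 9 (partial_transpose_B (rho_a a))
    \<and> eigenvector (id_tensor_map Gamma (rho_a a)) max_ent_vec
         (complex_of_real ((a - 1) / (18 + 6 * a)))
    \<and> coeff (char_poly (id_tensor_map Gamma (rho_a a))) 0
         = - det (id_tensor_map Gamma (rho_a a))
    \<and> (a < 1 \<longrightarrow> coeff (char_poly (id_tensor_map Gamma (rho_a a))) 0 \<in> \<real>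
               \<and> Re (coeff (char_poly (id_tensor_map Gamma (rho_a a))) 0) > 0)
    \<and> (a < 1 \<longrightarrow> entangled (rho_a a))"
proof -
  have a0: "a \<ge> 0" using assms by simp
  have st: "is_state 9 (rho_a a)" unfolding is_state_def using rho_psd[OF assms] rho_trace[OF a0] by simp
  have cp: "coeff (char_poly (id_tensor_map Gamma (rho_a a))) 0 = - det (id_tensor_map Gamma (rho_a a))"
    by (rule char0, unfold M_eq, use KM_carrier in simp)
  have pos: "coeff (char_poly (id_tensor_map Gamma (rho_a a))) 0 \<in> \<real>
               \<and> Re (coeff (char_poly (id_tensor_map Gamma (rho_a a))) 0) > 0" if "a < 1"
  proof -
    have "(1 / (3 * (3 + a)) / 2)^9 * ((1 - a) * (a + 2)^2 * (3 * a + 5)^3) > 0"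
      using that a0 by (intro mult_pos_pos) auto
    then have "- ((1 / (3 * (3 + a)) / 2)^9 * ((a - 1) * (a + 2)^2 * (3 * a + 5)^3)) > 0"
      by (simp add: algebra_simps)
    then show ?thesis unfolding coeff_val[OF a0] by simp
  qed
  show ?thesis
    using st rho_PT rho_psd[OF assms] eig[OF a0] cp pos not_sep[OF assms]
    unfolding entangled_def by simp
qed
end
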